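(* Consider the two-agent noisy-query allocation problem described in the context, with gap $\Delta>0$ (i.e., $\mathrm{OptEnvy}\le -\Delta$) and noise variance $\sigma^2>0$. Consider the following algorithm with query budget $q$: query each item $\tau=q/m$ times, obtaining $\{y^a_{i,t},y^b_{i,t}\}_{t=1}^{\tau}$; form $\widehat{\mu}^\nu_i=\frac1\tau\sum_{t=1}^\tau y^\nu_{i,t}$ for $\nu\in\{a,b\}$, $i\in[m]$; and, writing $\widehat{\mu}^\nu_S=\sum_{i\in S}\widehat{\mu}^\nu_i$, output the allocation $\mathcal{A}=(\mathcal{A}_a,\mathcal{A}_b)$ (over all partitions of $[m]$) maximizing $\min\{\widehat{\mu}^a_{\mathcal{A}_a}-\widehat{\mu}^a_{\mathcal{A}_b},\ \widehat{\mu}^b_{\mathcal{A}_b}-\widehat{\mu}^b_{\mathcal{A}_a}\}$. Then for any $\delta\in(0,1)$, this algorithm outputs an envy-free allocation with probability at least $1-\delta$ when the number of queries is set to $$q=m\left\lceil 32\sigma^2\log(4m/\delta)\cdot \frac{m^2}{\Delta^2}\right\rceil,$$ which is $\widetilde{O}(m^3/\Delta^2)$.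
   Context: Two agents $a,b$ and $m$ indivisible items $[m]=\{1,\dots,m\}$. Agent $\nu\in\{a,b\}$ has an unknown utility $\mu^\nu_i\in[0,1]$ for item $i$, and utilities are additive: the value of a set $S$ to $\nu$ is $\sum_{i\in S}\mu^\nu_i$. An allocation is a partition $\mathcal{A}=(\mathcal{A}_a,\mathcal{A}_b)$ of $[m]$. $\mathrm{Envy}_{a\to b}(\mathcal{A})=\sum_{i\in\mathcal{A}_b}\mu^a_i-\sum_{i\in\mathcal{A}_a}\mu^a_i$, $\mathrm{Envy}_{b\to a}(\mathcal{A})=\sum_{i\in\mathcal{A}_a}\mu^b_i-\sum_{i\in\mathcal{A}_b}\mu^b_i$, $\mathrm{Envy}(\mathcal{A})=\max\{\mathrm{Envy}_{a\to b}(\mathcal{A}),\mathrm{Envy}_{b\to a}(\mathcal{A})\}$; $\mathcal{A}$ is envy-free if $\mathrm{Envy}(\mathcal{A})\le 0$. $\mathrm{OptEnvy}=\min_{\mathcal{A}}\mathrm{Envy}(\mathcal{A})$. A query to item $i$ returns a pair $(y^a,y^b)$ with $y^\nu\sim N(\mu^\nu_i,\sigma^2)$; all query outcomes (across queries and across the two agents) are independent. $q$ is the total number of queries. $\log$ is the natural logarithm; $\widetilde O$ hides logarithmic factors. *)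

theory Defs
  imports "HOL-Probability.Probability"
begin

text \<open>Two agents. Items are indexed by 0..m-1 (i.e. the set {..<m}).
  An allocation is given by the set A of items of agent a; agent b gets the rest.\<close>

datatype agent = Agent_a | Agent_b

definition items :: "nat \<Rightarrow> nat set" where
  "items m = {..<m}"

definition envy_ab :: "(agent \<Rightarrow> nat \<Rightarrow> real) \<Rightarrow> nat \<Rightarrow> nat set \<Rightarrow> real" where
  "envy_ab mu m A = (\<Sum>i\<in>items m - A. mu Agent_a i) - (\<Sum>i\<in>A. mu Agent_a i)"

definition envy_ba :: "(agent \<Rightarrow> nat \<Rightarrow> real) \<Rightarrow> nat \<Rightarrow> nat set \<Rightarrow> real" where
  "envy_ba mu m A = (\<Sum>i\<in>A. mu Agent_b i) - (\<Sum>i\<in>items m - A. mu Agent_b i)"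

definition Envy :: "(agent \<Rightarrow> nat \<Rightarrow> real) \<Rightarrow> nat \<Rightarrow> nat set \<Rightarrow> real" where
  "Envy mu m A = max (envy_ab mu m A) (envy_ba mu m A)"

definition envy_free :: "(agent \<Rightarrow> nat \<Rightarrow> real) \<Rightarrow> nat \<Rightarrow> nat set \<Rightarrow> bool" where
  "envy_free mu m A \<longleftrightarrow> Envy mu m A \<le> 0"

definition OptEnvy :: "(agent \<Rightarrow> nat \<Rightarrow> real) \<Rightarrow> nat \<Rightarrow> real" where
  "OptEnvy mu m = Min (Envy mu m ` Pow (items m))"

text \<open>Probability space of all query outcomes when each item is queried tau times:
  outcome omega (i, t, nu) is the t-th observation of agent nu on item i, distributed
  N(mu nu i, sigma^2) (normal_density takes the standard deviation), all independent.\<close>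

definition query_space :: "nat \<Rightarrow> nat \<Rightarrow> (agent \<Rightarrow> nat \<Rightarrow> real) \<Rightarrow> real
    \<Rightarrow> (nat \<times> nat \<times> agent \<Rightarrow> real) measure" where
  "query_space m tau mu sd =
     PiM (items m \<times> {..<tau} \<times> UNIV)
         (\<lambda>(i, t, nu). density lborel (normal_density (mu nu i) sd))"

definition est :: "nat \<Rightarrow> (nat \<times> nat \<times> agent \<Rightarrow> real) \<Rightarrow> agent \<Rightarrow> nat \<Rightarrow> real" where
  "est tau omega nu i = (\<Sum>t<tau. omega (i, t, nu)) / real tau"

definition est_objective :: "nat \<Rightarrow> nat \<Rightarrow> (nat \<times> nat \<times> agent \<Rightarrow> real) \<Rightarrow> nat set \<Rightarrow> real" where
  "est_objective m tau omega A =
     min ((\<Sum>i\<in>A. est tau omega Agent_a i) - (\<Sum>i\<in>items m - A. est tau omega Agent_a i))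
         ((\<Sum>i\<in>items m - A. est tau omega Agent_b i) - (\<Sum>i\<in>A. est tau omega Agent_b i))"

definition alg_output :: "nat \<Rightarrow> nat \<Rightarrow> (nat \<times> nat \<times> agent \<Rightarrow> real) \<Rightarrow> nat set \<Rightarrow> bool" where
  "alg_output m tau omega A \<longleftrightarrow> A \<subseteq> items m \<and>
     (\<forall>B. B \<subseteq> items m \<longrightarrow> est_objective m tau omega B \<le> est_objective m tau omega A)"

text \<open>Per-item number of queries tau = q/m prescribed by the theorem.\<close>

definition queries_per_item :: "nat \<Rightarrow> real \<Rightarrow> real \<Rightarrow> real \<Rightarrow> nat" where
  "queries_per_item m sd Delta delta =
     nat \<lceil>32 * sd\<^sup>2 * ln (4 * real m / delta) * (real m)\<^sup>2 / Delta\<^sup>2\<rceil>"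

end

theory Submission
  imports Defs
begin

lemma UNIV_agent: "(UNIV :: agent set) = {Agent_a, Agent_b}"
  using agent.exhaust by auto
lemma normal_shift_id:
  assumes "\<sigma> > 0"
  shows "normal_density \<mu> \<sigma> x * exp (l * (x - \<mu>)) = exp (l\<^sup>2 * \<sigma>\<^sup>2 / 2) * normal_density (\<mu> + l * \<sigma>\<^sup>2) \<sigma> x"
proof -
  have "-(x - \<mu>)\<^sup>2/ (2 * \<sigma>\<^sup>2) + l * (x - \<mu>) = l\<^sup>2 * \<sigma>\<^sup>2 / 2 + -(x - (\<mu> + l * \<sigma>\<^sup>2))\<^sup>2/ (2 * \<sigma>\<^sup>2)"
    using assms by (simp add: field_simps power2_eq_square)
  then show ?thesis unfolding normal_density_def
    by (simp add: exp_add[symmetric] mult.commute mult.left_commute)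
qed

lemma normal_mgf:
  assumes "\<sigma> > 0"
  shows "(\<integral>\<^sup>+x. ennreal (exp (l * (x - \<mu>))) \<partial>density lborel (normal_density \<mu> \<sigma>)) = ennreal (exp (l\<^sup>2 * \<sigma>\<^sup>2 / 2))"
proof -
  have "(\<integral>\<^sup>+x. ennreal (exp (l * (x - \<mu>))) \<partial>density lborel (normal_density \<mu> \<sigma>))
      = (\<integral>\<^sup>+x. ennreal (normal_density \<mu> \<sigma> x) * ennreal (exp (l * (x - \<mu>))) \<partial>lborel)"
    by (subst nn_integral_density) auto
  also have "\<dots> = (\<integral>\<^sup>+x. ennreal (exp (l\<^sup>2 * \<sigma>\<^sup>2 / 2)) * ennreal (normal_density (\<mu> + l * \<sigma>\<^sup>2) \<sigma> x) \<partial>lborel)"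
    using assms by (intro nn_integral_cong) (simp add: ennreal_mult'[symmetric] normal_shift_id)
  also have "\<dots> = ennreal (exp (l\<^sup>2 * \<sigma>\<^sup>2 / 2)) * (\<integral>\<^sup>+x. ennreal (normal_density (\<mu> + l * \<sigma>\<^sup>2) \<sigma> x) \<partial>lborel)"
    by (rule nn_integral_cmult) auto
  also have "(\<integral>\<^sup>+x. ennreal (normal_density (\<mu> + l * \<sigma>\<^sup>2) \<sigma> x) \<partial>lborel) = 1"
    using assms by (subst nn_integral_eq_integral) auto
  finally show ?thesis by simp
qed

definition KK :: "(agent \<Rightarrow> nat \<Rightarrow> real) \<Rightarrow> real \<Rightarrow> nat \<times> nat \<times> agent \<Rightarrow> real measure" where
  "KK mu sd = (\<lambda>(i, t, nu). density lborel (normal_density (mu nu i) sd))"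

lemma KK_prob: "sd > 0 \<Longrightarrow> prob_space (KK mu sd k)"
  by (cases k) (auto simp: KK_def intro: prob_space_normal_density)

lemma KK_sets: "sets (KK mu sd k) = sets borel"
  by (cases k) (simp add: KK_def)

lemma query_space_KK: "query_space m tau mu sd = PiM (items m \<times> {..<tau} \<times> UNIV) (KK mu sd)"
  unfolding query_space_def KK_def ..

lemma comp_meas:
  "(\<lambda>\<omega>. \<omega> k) \<in> borel_measurable (query_space m tau mu sd)"
proof (cases "k \<in> items m \<times> {..<tau} \<times> UNIV")
  case True
  then have "(\<lambda>\<omega>. \<omega> k) \<in> measurable (query_space m tau mu sd) (KK mu sd k)"
    unfolding query_space_KK by (rule measurable_component_singleton)
  then show ?thesis by (subst (asm) measurable_cong_sets[OF refl KK_sets])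
next
  case False
  have eq: "w k = undefined" if "w \<in> space (query_space m tau mu sd)" for w
    using that False unfolding query_space_KK space_PiM by (rule PiE_arb)
  have "(\<lambda>_. undefined::real) \<in> borel_measurable (query_space m tau mu sd)" by (rule measurable_const) simp
  then show ?thesis
    by (rule measurable_cong[where f="\<lambda>\<omega>. \<omega> k" and g="\<lambda>_. undefined", THEN iffD2, rotated]) (rule eq)
qed

lemma est_meas[measurable]: "(\<lambda>\<omega>. est tau \<omega> nu i) \<in> borel_measurable (query_space m tau mu sd)"
  unfolding est_def using comp_meas by measurable

lemma chernoff_one:
  fixes c l a :: real
  assumes sd: "sd > 0" and i: "i \<in> items m" and l: "l > 0" and c: "c\<^sup>2 = 1"
  shows "emeasure (query_space m tau mu sd)
     {\<omega> \<in> space (query_space m tau mu sd). a \<le> (\<Sum>t<tau. c * (\<omega> (i, t, nu) - mu nu i))}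
     \<le> ennreal (exp (- l * a + real tau * (l\<^sup>2 * sd\<^sup>2 / 2)))"
proof -
  define I where "I = items m \<times> {..<tau} \<times> (UNIV :: agent set)"
  define M where "M = query_space m tau mu sd"
  define K where "K = KK mu sd"
  have M_eq: "M = PiM I K" unfolding M_def I_def K_def query_space_KK ..
  have P: "prob_space (K k)" for k unfolding K_def by (rule KK_prob[OF sd])
  interpret product_prob_space K I
    by (simp add: product_prob_space_def product_sigma_finite_def product_prob_space_axioms_def P prob_space_imp_sigma_finite)
  have finI: "finite I" unfolding I_def items_def UNIV_agent by simp
  define f where "f = (\<lambda>\<omega>. (\<Sum>t<tau. c * (\<omega> (i, t, nu) - mu nu i)))"
  have fm[measurable]: "f \<in> borel_measurable M" unfolding f_def M_def using comp_meas by measurable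
  define J where "J = (\<lambda>t. (i, t, nu)) ` {..<tau}"
  have JI: "J \<subseteq> I" unfolding J_def I_def using i by auto
  have injJ: "inj_on (\<lambda>t. (i, t, nu)) {..<tau}" by (auto simp: inj_on_def)
  define G where "G = (\<lambda>k x. if k \<in> J then ennreal (exp ((l * c) * (x - mu nu i))) else 1)"
  have "emeasure M {\<omega> \<in> space M. a \<le> f \<omega>} \<le>
      ennreal (exp (-l * a)) * (\<integral>\<^sup>+\<omega>. ennreal (exp (l * f \<omega>)) * indicator (space M) \<omega> \<partial>M)"
    by (rule Chernoff_ineq_nn_integral_ge[OF l sets.top]) measurable
  also have "(\<integral>\<^sup>+\<omega>. ennreal (exp (l * f \<omega>)) * indicator (space M) \<omega> \<partial>M)
      = (\<integral>\<^sup>+\<omega>. (\<Prod>k\<in>I. G k (\<omega> k)) \<partial>M)"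
  proof (intro nn_integral_cong)
    fix \<omega> assume "\<omega> \<in> space M"
    have "(\<Prod>k\<in>I. G k (\<omega> k)) = (\<Prod>k\<in>J. G k (\<omega> k))"
      by (rule prod.mono_neutral_right[OF finI JI]) (auto simp: G_def)
    also have "\<dots> = (\<Prod>t<tau. G (i, t, nu) (\<omega> (i, t, nu)))"
      unfolding J_def by (rule prod.reindex[OF injJ, unfolded comp_def])
    also have "\<dots> = (\<Prod>t<tau. ennreal (exp ((l * c) * (\<omega> (i, t, nu) - mu nu i))))"
      by (intro prod.cong) (auto simp: G_def J_def)
    also have "\<dots> = ennreal (exp (l * f \<omega>))"
      by (simp add: prod_ennreal exp_sum f_def sum_distrib_left mult.assoc)
    finally show "ennreal (exp (l * f \<omega>)) * indicator (space M) \<omega> = (\<Prod>k\<in>I. G k (\<omega> k))"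
      using \<open>\<omega> \<in> space M\<close> by simp
  qed
  also have "\<dots> = (\<Prod>k\<in>I. integral\<^sup>N (K k) (G k))"
    unfolding M_eq
  proof (rule product_nn_integral_prod[OF finI])
    fix k assume "k \<in> I"
    have "(\<lambda>x. if k \<in> J then ennreal (exp ((l * c) * (x - mu nu i))) else 1) \<in> borel_measurable borel"
      by measurable
    then show "G k \<in> borel_measurable (K k)"
      unfolding G_def K_def by (subst measurable_cong_sets[OF KK_sets refl])
  qed
  also have "\<dots> = (\<Prod>k\<in>J. integral\<^sup>N (K k) (G k))"
    by (rule prod.mono_neutral_right[OF finI JI]) (auto simp: G_def M.emeasure_space_1)
  also have "\<dots> = (\<Prod>k\<in>J. ennreal (exp (l\<^sup>2 * sd\<^sup>2 / 2)))"
  proof (intro prod.cong refl)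
    fix k assume "k \<in> J"
    then have "K k = density lborel (normal_density (mu nu i) sd)"
      by (auto simp: J_def K_def KK_def)
    moreover have "integral\<^sup>N (K k) (G k) = (\<integral>\<^sup>+x. ennreal (exp ((l * c) * (x - mu nu i))) \<partial>K k)"
      using \<open>k \<in> J\<close> by (simp add: G_def)
    ultimately show "integral\<^sup>N (K k) (G k) = ennreal (exp (l\<^sup>2 * sd\<^sup>2 / 2))"
      using normal_mgf[OF sd, where l="l * c" and \<mu>="mu nu i"] c by (simp add: power_mult_distrib)
  qed
  also have "\<dots> = ennreal (exp (l\<^sup>2 * sd\<^sup>2 / 2)) ^ tau"
    using card_image[OF injJ] by (simp add: J_def)
  also have "ennreal (exp (-l * a)) * \<dots> = ennreal (exp (- l * a + real tau * (l\<^sup>2 * sd\<^sup>2 / 2)))"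
  proof -
    have "exp (l\<^sup>2 * sd\<^sup>2 / 2) ^ tau = exp (real tau * (l\<^sup>2 * sd\<^sup>2 / 2))"
      by (rule exp_of_nat_mult[symmetric])
    then have pw: "ennreal (exp (l\<^sup>2 * sd\<^sup>2 / 2)) ^ tau = ennreal (exp (real tau * (l\<^sup>2 * sd\<^sup>2 / 2)))"
      by (simp add: ennreal_power)
    have e: "exp (- l * a) * exp (real tau * (l\<^sup>2 * sd\<^sup>2 / 2)) = exp (- l * a + real tau * (l\<^sup>2 * sd\<^sup>2 / 2))"
      by (rule mult_exp_exp)
    show ?thesis unfolding pw e[symmetric] by (rule ennreal_mult[symmetric]) simp_all
  qed
  finally show ?thesis unfolding M_def f_def .
qed

lemma est_minus:
  assumes "tau > 0"
  shows "est tau \<omega> nu i - mu nu i = (\<Sum>t<tau. (\<omega> (i, t, nu) - mu nu i)) / real tau"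
  using assms by (simp add: est_def sum_subtractf field_simps)

lemma tail:
  assumes sd: "sd > 0" and i: "i \<in> items m" and tau: "tau > 0" and t0: "t0 > 0"
  shows "measure (query_space m tau mu sd) {\<omega> \<in> space (query_space m tau mu sd). t0 \<le> \<bar>est tau \<omega> nu i - mu nu i\<bar>}
     \<le> 2 * exp (- real tau * t0\<^sup>2 / (2 * sd\<^sup>2))"
proof -
  define M where "M = query_space m tau mu sd"
  interpret M: prob_space M unfolding M_def query_space_KK by (rule prob_space_PiM) (rule KK_prob[OF sd])
  define U where "U = (\<lambda>c::real. {\<omega> \<in> space M. real tau * t0 \<le> (\<Sum>t<tau. c * (\<omega> (i, t, nu) - mu nu i))})"
  have Um: "U c \<in> sets M" for c unfolding U_def M_def using comp_meas by measurable
  define l where "l = t0 / sd\<^sup>2"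
  have l: "l > 0" using sd t0 by (simp add: l_def)
  have ex: "- l * (real tau * t0) + real tau * (l\<^sup>2 * sd\<^sup>2 / 2) = - real tau * t0\<^sup>2 / (2 * sd\<^sup>2)"
    using sd by (simp add: l_def field_simps power2_eq_square)
  have bnd: "measure M (U c) \<le> exp (- real tau * t0\<^sup>2 / (2 * sd\<^sup>2))" if "c\<^sup>2 = 1" for c
  proof -
    have "emeasure M (U c) \<le> ennreal (exp (- real tau * t0\<^sup>2 / (2 * sd\<^sup>2)))"
      using chernoff_one[OF sd i l that, where a="real tau * t0" and tau=tau and mu=mu and nu=nu] unfolding U_def M_def ex .
    then show ?thesis using M.emeasure_eq_measure by simp
  qed
  have sub: "{\<omega> \<in> space M. t0 \<le> \<bar>est tau \<omega> nu i - mu nu i\<bar>} \<subseteq> U 1 \<union> U (-1)"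
  proof
    fix \<omega> assume "\<omega> \<in> {\<omega> \<in> space M. t0 \<le> \<bar>est tau \<omega> nu i - mu nu i\<bar>}"
    then have w: "\<omega> \<in> space M" and t: "t0 \<le> \<bar>(\<Sum>t<tau. (\<omega> (i, t, nu) - mu nu i)) / real tau\<bar>"
      using est_minus[OF tau] by auto
    define X where "X = (\<Sum>t<tau. (\<omega> (i, t, nu) - mu nu i))"
    have "\<bar>X / real tau\<bar> = \<bar>X\<bar> / real tau" by (simp add: abs_divide)
    then have "t0 \<le> \<bar>X\<bar> / real tau" using t unfolding X_def by simp
    then have tX: "t0 * real tau \<le> \<bar>X\<bar>" using tau by (simp add: pos_le_divide_eq)
    have cfact: "(\<Sum>t<tau. c * (\<omega> (i, t, nu) - mu nu i)) = c * X" for c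
      unfolding X_def by (simp add: sum_distrib_left)
    have "real tau * t0 \<le> 1 * X \<or> real tau * t0 \<le> (-1) * X"
      using tX by (cases "X \<ge> 0") (simp_all add: mult.commute)
    then have "real tau * t0 \<le> (\<Sum>t<tau. 1 * (\<omega> (i, t, nu) - mu nu i)) \<or>
        real tau * t0 \<le> (\<Sum>t<tau. (-1) * (\<omega> (i, t, nu) - mu nu i))"
      unfolding cfact .
    then show "\<omega> \<in> U 1 \<union> U (-1)" using w unfolding U_def by blast
  qed
  have "measure M {\<omega> \<in> space M. t0 \<le> \<bar>est tau \<omega> nu i - mu nu i\<bar>} \<le> measure M (U 1 \<union> U (-1))"
    by (rule M.finite_measure_mono[OF sub sets.Un[OF Um[of 1] Um[of "-1"]]])
  also have "\<dots> \<le> measure M (U 1) + measure M (U (-1))"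
    by (rule measure_subadditive[OF Um[of 1] Um[of "-1"]]) (simp_all add: M.emeasure_eq_measure)
  also have "\<dots> \<le> 2 * exp (- real tau * t0\<^sup>2 / (2 * sd\<^sup>2))"
    using bnd[of 1] bnd[of "-1"] by simp
  finally show ?thesis unfolding M_def .
qed

lemma envy_close:
  assumes A: "A \<subseteq> items m" and e: "\<And>nu i. i \<in> items m \<Longrightarrow> \<bar>f nu i - g nu i\<bar> \<le> e"
  shows "\<bar>Envy f m A - Envy g m A\<bar> \<le> real m * e"
proof -
  have fin: "finite (items m)" by (simp add: items_def)
  have finA: "finite A" using A fin finite_subset by blast
  have key: "\<bar>(\<Sum>i\<in>items m - A. h i) - (\<Sum>i\<in>A. h i)\<bar> \<le> real m * e"
    if h: "\<And>i. i \<in> items m \<Longrightarrow> \<bar>h i\<bar> \<le> e" for h :: "nat \<Rightarrow> real"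
  proof -
    have "\<bar>(\<Sum>i\<in>items m - A. h i) - (\<Sum>i\<in>A. h i)\<bar> \<le> (\<Sum>i\<in>items m - A. \<bar>h i\<bar>) + (\<Sum>i\<in>A. \<bar>h i\<bar>)"
      by (rule order_trans[OF abs_triangle_ineq4 add_mono[OF sum_abs sum_abs]])
    also have "\<dots> = (\<Sum>i\<in>items m. \<bar>h i\<bar>)"
      using sum.subset_diff[OF A fin, of "\<lambda>i. \<bar>h i\<bar>"] by simp
    also have "\<dots> \<le> (\<Sum>i\<in>items m. e)" by (rule sum_mono) (rule h)
    also have "\<dots> = real m * e" by (simp add: items_def)
    finally show ?thesis .
  qed
  have 1: "\<bar>envy_ab f m A - envy_ab g m A\<bar> \<le> real m * e"
    using key[of "\<lambda>i. f Agent_a i - g Agent_a i"] e unfolding envy_ab_def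
    by (simp add: sum_subtractf algebra_simps)
  have 2: "\<bar>envy_ba f m A - envy_ba g m A\<bar> \<le> real m * e"
    using key[of "\<lambda>i. g Agent_b i - f Agent_b i"] e unfolding envy_ba_def
    by (simp add: sum_subtractf algebra_simps abs_minus_commute)
  show ?thesis using 1 2 unfolding Envy_def by (simp add: abs_le_iff max_def)
qed

lemma obj_eq: "est_objective m tau \<omega> A = - Envy (est tau \<omega>) m A"
  unfolding est_objective_def Envy_def envy_ab_def envy_ba_def by (simp add: min_def max_def)

lemma det:
  assumes D: "Delta > 0" and opt: "OptEnvy mu m \<le> - Delta"
    and close: "\<And>nu i. i \<in> items m \<Longrightarrow> \<bar>est tau \<omega> nu i - mu nu i\<bar> \<le> Delta / (2 * real m)"
    and out: "alg_output m tau \<omega> A"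
  shows "envy_free mu m A"
proof -
  have fin: "finite (Pow (items m))" by (simp add: items_def)
  have "Envy mu m ` Pow (items m) \<noteq> {}" by auto
  then have "OptEnvy mu m \<in> Envy mu m ` Pow (items m)"
    unfolding OptEnvy_def using fin by (intro Min_in) auto
  then obtain As where As: "As \<subseteq> items m" "Envy mu m As = OptEnvy mu m" by auto
  have m: "m > 0"
  proof (rule ccontr)
    assume "\<not> m > 0"
    then have "items m = {}" by (simp add: items_def)
    then have "OptEnvy mu m = 0" unfolding OptEnvy_def Envy_def envy_ab_def envy_ba_def by simp
    then show False using opt D by simp
  qed
  have eq: "real m * (Delta / (2 * real m)) = Delta / 2" using m by simp
  have A: "A \<subseteq> items m" and mx: "est_objective m tau \<omega> As \<le> est_objective m tau \<omega> A"
    using out As unfolding alg_output_def by auto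
  have c1: "\<bar>Envy (est tau \<omega>) m A - Envy mu m A\<bar> \<le> Delta / 2"
    using envy_close[where f="est tau \<omega>" and g=mu and e="Delta / (2 * real m)", OF A close] eq by simp
  have c2: "\<bar>Envy (est tau \<omega>) m As - Envy mu m As\<bar> \<le> Delta / 2"
    using envy_close[where f="est tau \<omega>" and g=mu and e="Delta / (2 * real m)", OF As(1) close] eq by simp
  show ?thesis unfolding envy_free_def using c1 c2 mx As opt unfolding obj_eq by linarith
qed

lemma obj_meas[measurable]: "(\<lambda>\<omega>. est_objective m tau \<omega> A) \<in> borel_measurable (query_space m tau mu sd)"
  unfolding est_objective_def by measurable


theorem theorem1:
  fixes mu :: "agent \<Rightarrow> nat \<Rightarrow> real" and m :: nat
    and sd Delta delta :: real and tau q :: nat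
  assumes "\<And>nu i. i \<in> items m \<Longrightarrow> 0 \<le> mu nu i \<and> mu nu i \<le> 1"
    and "Delta > 0" and "OptEnvy mu m \<le> - Delta"
    and "sd > 0"
    and "0 < delta" and "delta < 1"
    and "tau = queries_per_item m sd Delta delta"
    and "q = m * tau"
  shows "measure (query_space m tau mu sd)
           {omega \<in> space (query_space m tau mu sd).
              \<forall>A. alg_output m tau omega A \<longrightarrow> envy_free mu m A} \<ge> 1 - delta"
proof -
  note D = assms(2) and opt = assms(3) and sd = assms(4) and dl = assms(5,6) and tau_def = assms(7)
  define M where "M = query_space m tau mu sd"
  interpret M: prob_space M unfolding M_def query_space_KK by (rule prob_space_PiM) (rule KK_prob[OF sd])
  have m: "m > 0"
  proof (rule ccontr)
    assume "\<not> m > 0"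
    then have "items m = {}" by (simp add: items_def)
    then have "OptEnvy mu m = 0" unfolding OptEnvy_def Envy_def envy_ab_def envy_ba_def by simp
    then show False using opt D by simp
  qed
  define L where "L = ln (4 * real m / delta)"
  have L: "L > 0" unfolding L_def using m dl by (simp add: ln_gt_zero_iff)
  have tau_ge: "real tau \<ge> 32 * sd\<^sup>2 * L * (real m)\<^sup>2 / Delta\<^sup>2"
  proof -
    define x where "x = 32 * sd\<^sup>2 * ln (4 * real m / delta) * (real m)\<^sup>2 / Delta\<^sup>2"
    have "x \<le> of_int \<lceil>x\<rceil>" by (rule le_of_int_ceiling)
    also have "of_int \<lceil>x\<rceil> \<le> real (nat \<lceil>x\<rceil>)" by (cases "\<lceil>x\<rceil> \<ge> 0") auto
    finally show ?thesis unfolding tau_def queries_per_item_def L_def x_def .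
  qed
  have "32 * sd\<^sup>2 * L * (real m)\<^sup>2 / Delta\<^sup>2 > 0" using sd L m D by simp
  then have tau: "tau > 0" using tau_ge by linarith
  define t0 where "t0 = Delta / (2 * real m)"
  have t0: "t0 > 0" unfolding t0_def using D m by simp
  define bad where "bad = (\<lambda>p. {\<omega> \<in> space M. t0 \<le> \<bar>est tau \<omega> (snd p) (fst p) - mu (snd p) (fst p)\<bar>})"
  define P where "P = items m \<times> (UNIV :: agent set)"
  have finP: "finite P" unfolding P_def items_def UNIV_agent by simp
  have cardP: "card P = 2 * m" unfolding P_def items_def UNIV_agent by (simp add: card_cartesian_product)
  have bad_m: "bad p \<in> sets M" for p unfolding bad_def M_def by measurable
  define S where "S = {omega \<in> space M. \<forall>A. alg_output m tau omega A \<longrightarrow> envy_free mu m A}"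
  have S_eq: "S = {omega \<in> space M. \<forall>A\<in>Pow (items m).
      (\<forall>B\<in>Pow (items m). est_objective m tau omega B \<le> est_objective m tau omega A) \<longrightarrow> envy_free mu m A}"
    unfolding S_def alg_output_def by auto
  have finPow: "finite (Pow (items m))" by (simp add: items_def)
  define LE where "LE = (\<lambda>A B. {omega \<in> space M. est_objective m tau omega B \<le> est_objective m tau omega A})"
  have LE_m: "LE A B \<in> sets M" for A B unfolding LE_def M_def by measurable
  have PowNE: "Pow (items m) \<noteq> {}" by auto
  have INT_m: "(\<Inter>B\<in>Pow (items m). LE A B) \<in> sets M" for A
    by (rule sets.finite_INT[OF finPow]) (use LE_m PowNE in auto)
  define BadA where "BadA = {A \<in> Pow (items m). \<not> envy_free mu m A}"
  have finBadA: "finite BadA" unfolding BadA_def using finPow by simp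
  have S_eq2: "S = space M - (\<Union>A\<in>BadA. (\<Inter>B\<in>Pow (items m). LE A B))"
    unfolding S_eq LE_def BadA_def by blast
  have S_m: "S \<in> sets M" unfolding S_eq2
    by (intro sets.Diff sets.top sets.finite_UN[OF finBadA] ballI INT_m)
  have GS: "space M - (\<Union>p\<in>P. bad p) \<subseteq> S"
  proof
    fix \<omega> assume w: "\<omega> \<in> space M - (\<Union>p\<in>P. bad p)"
    have close: "\<bar>est tau \<omega> nu i - mu nu i\<bar> \<le> Delta / (2 * real m)" if "i \<in> items m" for nu i
    proof -
      have "(i, nu) \<in> P" using that by (simp add: P_def)
      then have "\<omega> \<notin> bad (i, nu)" using w by blast
      then have "\<not> t0 \<le> \<bar>est tau \<omega> nu i - mu nu i\<bar>" using w by (simp add: bad_def)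
      then show ?thesis unfolding t0_def by linarith
    qed
    show "\<omega> \<in> S" unfolding S_def using w det[OF D opt close] by blast
  qed
  have tailp: "measure M (bad p) \<le> 2 * exp (- real tau * t0\<^sup>2 / (2 * sd\<^sup>2))" if "p \<in> P" for p
    using tail[OF sd _ tau t0, of "fst p" m mu "snd p"] that unfolding bad_def M_def P_def by auto
  have ex: "exp (- real tau * t0\<^sup>2 / (2 * sd\<^sup>2)) \<le> delta / (4 * real m)"
  proof -
    have "real tau * t0\<^sup>2 / (2 * sd\<^sup>2) \<ge> 32 * sd\<^sup>2 * L * (real m)\<^sup>2 / Delta\<^sup>2 * t0\<^sup>2 / (2 * sd\<^sup>2)"
      using tau_ge sd by (intro divide_right_mono mult_right_mono) auto
    also have "32 * sd\<^sup>2 * L * (real m)\<^sup>2 / Delta\<^sup>2 * t0\<^sup>2 / (2 * sd\<^sup>2) = 4 * L"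
      unfolding t0_def using sd D m by (simp add: field_simps power2_eq_square)
    finally have "- real tau * t0\<^sup>2 / (2 * sd\<^sup>2) \<le> - L" using L by simp
    then have "exp (- real tau * t0\<^sup>2 / (2 * sd\<^sup>2)) \<le> exp (- L)" by simp
    also have "exp (- L) = delta / (4 * real m)"
    proof -
      have pos: "4 * real m / delta > 0" using m dl by simp
      have "exp (- L) = inverse (exp (ln (4 * real m / delta)))" unfolding L_def by (rule exp_minus)
      also have "\<dots> = inverse (4 * real m / delta)" using pos by simp
      also have "\<dots> = delta / (4 * real m)" by simp
      finally show ?thesis .
    qed
    finally show ?thesis .
  qed
  have "measure M (\<Union>p\<in>P. bad p) \<le> (\<Sum>p\<in>P. measure M (bad p))"
    by (rule M.finite_measure_subadditive_finite[OF finP]) (use bad_m in blast)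
  also have "\<dots> \<le> (\<Sum>p\<in>P. 2 * exp (- real tau * t0\<^sup>2 / (2 * sd\<^sup>2)))"
    by (rule sum_mono) (rule tailp)
  also have "\<dots> = real (2 * m) * (2 * exp (- real tau * t0\<^sup>2 / (2 * sd\<^sup>2)))"
    using cardP by simp
  also have "\<dots> \<le> real (2 * m) * (2 * (delta / (4 * real m)))"
    using ex by (intro mult_left_mono) auto
  also have "\<dots> = delta" using m by simp
  finally have U: "measure M (\<Union>p\<in>P. bad p) \<le> delta" .
  have Um: "(\<Union>p\<in>P. bad p) \<in> sets M" using bad_m finP by auto
  have "1 - delta \<le> measure M (space M - (\<Union>p\<in>P. bad p))"
    using M.prob_compl[OF Um] U by simp
  also have "\<dots> \<le> measure M S"
    by (rule M.finite_measure_mono[OF GS S_m])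
  finally show ?thesis unfolding S_def M_def .
qed
end
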